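(* There exist finite connected simple graphs $H_1$ and $H_2$ having a common universal cover (equivalently, a common finite connected covering graph) such that their minimal common cover is not unique. That is, there exist at least two pairwise non-isomorphic connected graphs, each of which is a covering graph of both $H_1$ and $H_2$, and each of which has the minimum number of vertices among all connected common covering graphs of $H_1$ and $H_2$.
   Context: A graph $\tilde G$ is a covering graph of a graph $G$ if there is a surjective graph homomorphism $f\colon\tilde G\to G$ such that, for every vertex $v$ of $\tilde G$, $f$ maps the set of edges incident with $v$ bijectively onto the set of edges incident with $f(v)$. A common cover of $H_1$ and $H_2$ is a graph that is a covering graph of both. The universal cover of a connected graph is its (possibly infinite) universal covering tree. *)

theory Defs
  imports Main
begin

definition simple_graph :: "'a set \<Rightarrow> ('a \<Rightarrow> 'a \<Rightarrow> bool) \<Rightarrow> bool" where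
  "simple_graph V E \<longleftrightarrow>
     (\<forall>x y. E x y \<longrightarrow> x \<in> V \<and> y \<in> V) \<and>
     (\<forall>x y. E x y \<longrightarrow> E y x) \<and> (\<forall>x. \<not> E x x)"

definition finite_simple_graph :: "'a set \<Rightarrow> ('a \<Rightarrow> 'a \<Rightarrow> bool) \<Rightarrow> bool" where
  "finite_simple_graph V E \<longleftrightarrow> finite V \<and> simple_graph V E"

definition connected_graph :: "'a set \<Rightarrow> ('a \<Rightarrow> 'a \<Rightarrow> bool) \<Rightarrow> bool" where
  "connected_graph V E \<longleftrightarrow> V \<noteq> {} \<and> (\<forall>x\<in>V. \<forall>y\<in>V. E\<^sup>*\<^sup>* x y)"

text \<open>In a simple
graph the edges incident with v correspond to the neighbours of v.\<close>

definition covering_map ::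
  "'a set \<Rightarrow> ('a \<Rightarrow> 'a \<Rightarrow> bool) \<Rightarrow> 'b set \<Rightarrow> ('b \<Rightarrow> 'b \<Rightarrow> bool) \<Rightarrow> ('a \<Rightarrow> 'b) \<Rightarrow> bool" where
  "covering_map VC EC V E f \<longleftrightarrow>
     f ` VC = V \<and>
     (\<forall>x y. EC x y \<longrightarrow> E (f x) (f y)) \<and>
     (\<forall>v\<in>VC. bij_betw f {w. EC v w} {u. E (f v) u})"

definition covering_graph ::
  "'a set \<Rightarrow> ('a \<Rightarrow> 'a \<Rightarrow> bool) \<Rightarrow> 'b set \<Rightarrow> ('b \<Rightarrow> 'b \<Rightarrow> bool) \<Rightarrow> bool" where
  "covering_graph VC EC V E \<longleftrightarrow> (\<exists>f. covering_map VC EC V E f)"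

definition graph_iso ::
  "'a set \<Rightarrow> ('a \<Rightarrow> 'a \<Rightarrow> bool) \<Rightarrow> 'b set \<Rightarrow> ('b \<Rightarrow> 'b \<Rightarrow> bool) \<Rightarrow> bool" where
  "graph_iso V E V' E' \<longleftrightarrow>
     (\<exists>f. bij_betw f V V' \<and> (\<forall>x\<in>V. \<forall>y\<in>V. E x y \<longleftrightarrow> E' (f x) (f y)))"

definition common_cover ::
  "'a set \<Rightarrow> ('a \<Rightarrow> 'a \<Rightarrow> bool) \<Rightarrow> 'b set \<Rightarrow> ('b \<Rightarrow> 'b \<Rightarrow> bool) \<Rightarrow> 'b set \<Rightarrow> ('b \<Rightarrow> 'b \<Rightarrow> bool) \<Rightarrow> bool" where
  "common_cover VC EC V1 E1 V2 E2 \<longleftrightarrow>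
     finite_simple_graph VC EC \<and> connected_graph VC EC \<and>
     covering_graph VC EC V1 E1 \<and> covering_graph VC EC V2 E2"

end

theory Submission imports Defs begin

definition adjL :: "(nat \<times> nat) list \<Rightarrow> nat \<Rightarrow> nat \<Rightarrow> bool" where
  "adjL L x y \<longleftrightarrow> (x, y) \<in> set L \<or> (y, x) \<in> set L"

definition nbrs :: "(nat \<times> nat) list \<Rightarrow> nat \<Rightarrow> nat list" where
  "nbrs L v = map snd (filter (\<lambda>p. fst p = v) L) @ map fst (filter (\<lambda>p. snd p = v) L)"

lemma set_nbrs: "set (nbrs L v) = {w. adjL L v w}"
  unfolding nbrs_def adjL_def by force

definition wf_check :: "nat \<Rightarrow> (nat \<times> nat) list \<Rightarrow> bool" where
  "wf_check n L \<longleftrightarrow> list_all (\<lambda>(a, b). a < n \<and> b < n \<and> a \<noteq> b) L"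

definition conn_check :: "nat \<Rightarrow> (nat \<times> nat) list \<Rightarrow> bool" where
  "conn_check n L \<longleftrightarrow> 0 < n \<and> list_all (\<lambda>x. list_ex (\<lambda>y. y < x) (nbrs L x)) [1..<n]"

definition cov_check :: "nat \<Rightarrow> (nat \<times> nat) list \<Rightarrow> nat \<Rightarrow> (nat \<times> nat) list \<Rightarrow> nat list \<Rightarrow> bool" where
  "cov_check nc Lc n L fl \<longleftrightarrow> length fl = nc \<and> list_all (\<lambda>x. x < n) fl \<and>
     list_all (\<lambda>y. y \<in> set fl) [0..<n] \<and>
     list_all (\<lambda>(a, b). adjL L (fl ! a) (fl ! b)) Lc \<and>
     list_all (\<lambda>v. distinct (map (nth fl) (nbrs Lc v)) \<and>
        set (map (nth fl) (nbrs Lc v)) = set (nbrs L (fl ! v))) [0..<nc]"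

definition tf_check :: "(nat \<times> nat) list \<Rightarrow> bool" where
  "tf_check L \<longleftrightarrow> list_all (\<lambda>(a, b). list_all (\<lambda>w. w \<notin> set (nbrs L b)) (nbrs L a)) L"

definition L1 :: "(nat \<times> nat) list" where
  "L1 = [(0, 1), (0, 2), (0, 3), (1, 2), (2, 4), (3, 4), (3, 5), (4, 5)]"
definition L2 :: "(nat \<times> nat) list" where
  "L2 = [(0, 1), (0, 2), (0, 3), (1, 2), (2, 4), (3, 5), (3, 6), (4, 7), (4, 8), (5, 6), (5, 8), (7, 8)]"
definition LA :: "(nat \<times> nat) list" where
  "LA = [(0, 1), (0, 2), (0, 3), (1, 2), (2, 4), (3, 5), (3, 6), (4, 7), (4, 8), (5, 6), (5, 9), (7, 8), (8, 10), (9, 11), (9, 12), (10, 13), (10, 14), (11, 12), (11, 15), (13, 14), (14, 16), (15, 16), (15, 17), (16, 17)]"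
definition fA1 :: "nat list" where "fA1 = [0, 1, 2, 3, 4, 4, 5, 5, 3, 2, 0, 0, 1, 1, 2, 3, 4, 5]"
definition fA2 :: "nat list" where "fA2 = [0, 1, 2, 3, 4, 5, 6, 7, 8, 8, 5, 4, 7, 6, 3, 2, 0, 1]"
definition LB :: "(nat \<times> nat) list" where
  "LB = [(0, 1), (0, 2), (0, 3), (1, 4), (2, 5), (2, 6), (3, 7), (3, 8), (4, 9), (4, 10), (5, 11), (5, 12), (6, 13), (7, 14), (7, 15), (8, 10), (9, 12), (9, 16), (10, 17), (11, 17), (12, 14), (13, 15), (13, 17), (15, 16)]"
definition fB1 :: "nat list" where "fB1 = [0, 1, 2, 3, 2, 4, 1, 4, 5, 0, 4, 5, 3, 0, 5, 2, 1, 3]"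
definition fB2 :: "nat list" where "fB2 = [0, 1, 3, 2, 2, 5, 6, 4, 1, 4, 0, 6, 8, 5, 7, 8, 7, 3]"

lemma checks:
  "wf_check 6 L1" "wf_check 9 L2" "wf_check 18 LA" "wf_check 18 LB"
  "conn_check 6 L1" "conn_check 9 L2" "conn_check 18 LA" "conn_check 18 LB"
  "cov_check 18 LA 6 L1 fA1" "cov_check 18 LA 9 L2 fA2"
  "cov_check 18 LB 6 L1 fB1" "cov_check 18 LB 9 L2 fB2"
  "tf_check LB"
  by code_simp+

lemma triA: "adjL LA 0 1 \<and> adjL LA 1 2 \<and> adjL LA 2 0"
  by (simp add: adjL_def LA_def)

lemma adjL_sym: "adjL L x y \<Longrightarrow> adjL L y x"
  by (auto simp: adjL_def)

lemma wf_sound: "wf_check n L \<Longrightarrow> finite_simple_graph {0..<n} (adjL L)"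
  unfolding wf_check_def finite_simple_graph_def simple_graph_def list_all_iff adjL_def
  by fastforce

lemma conn_reach0:
  assumes "conn_check n L" shows "x < n \<Longrightarrow> (adjL L)\<^sup>*\<^sup>* x 0"
proof (induction x rule: less_induct)
  case (less x)
  show ?case
  proof (cases "x = 0")
    case True then show ?thesis by simp
  next
    case False
    then have "x \<in> set [1..<n]" using less.prems by auto
    with assms obtain y where "y \<in> set (nbrs L x)" "y < x"
      unfolding conn_check_def list_all_iff list_ex_iff by blast
    then have "adjL L x y" "y < n" using less.prems set_nbrs by auto
    with less.IH[OF \<open>y < x\<close>] show ?thesis
      by (meson converse_rtranclp_into_rtranclp)
  qed
qed

lemma rtranclp_sym_conv:
  assumes "\<And>a b. R a b \<Longrightarrow> R b a" shows "R\<^sup>*\<^sup>* x y \<Longrightarrow> R\<^sup>*\<^sup>* y x"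
  by (induction rule: rtranclp_induct) (auto intro: converse_rtranclp_into_rtranclp assms)

lemma conn_sound: "conn_check n L \<Longrightarrow> connected_graph {0..<n} (adjL L)"
proof -
  assume c: "conn_check n L"
  have "(adjL L)\<^sup>*\<^sup>* x y" if "x < n" "y < n" for x y
  proof -
    have "(adjL L)\<^sup>*\<^sup>* x 0" using conn_reach0[OF c that(1)] .
    moreover have "(adjL L)\<^sup>*\<^sup>* 0 y"
      using rtranclp_sym_conv[OF adjL_sym conn_reach0[OF c that(2)]] .
    ultimately show ?thesis by simp
  qed
  moreover have "n > 0" using c by (simp add: conn_check_def)
  ultimately show ?thesis unfolding connected_graph_def by auto
qed

lemma cov_sound:
  assumes "cov_check nc Lc n L fl"
  shows "covering_map {0..<nc} (adjL Lc) {0..<n} (adjL L) (\<lambda>x. fl ! x)"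
proof -
  from assms have len: "length fl = nc" and rng: "list_all (\<lambda>x. x < n) fl"
    and sur: "list_all (\<lambda>y. y \<in> set fl) [0..<n]"
    and ed: "list_all (\<lambda>(a, b). adjL L (fl ! a) (fl ! b)) Lc"
    and lb: "list_all (\<lambda>v. distinct (map (nth fl) (nbrs Lc v)) \<and>
        set (map (nth fl) (nbrs Lc v)) = set (nbrs L (fl ! v))) [0..<nc]"
    unfolding cov_check_def by auto
  have img: "(\<lambda>x. fl ! x) ` {0..<nc} = set fl"
    using len by (auto simp: in_set_conv_nth)
  have "set fl = {0..<n}" using rng sur by (auto simp: list_all_iff)
  then have 1: "(\<lambda>x. fl ! x) ` {0..<nc} = {0..<n}" using img by simp
  have 2: "adjL L (fl ! x) (fl ! y)" if "adjL Lc x y" for x y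
    using that ed unfolding adjL_def list_all_iff by (auto intro: adjL_sym[unfolded adjL_def])
  have 3: "bij_betw (\<lambda>x. fl ! x) {w. adjL Lc v w} {u. adjL L (fl ! v) u}" if "v \<in> {0..<nc}" for v
  proof -
    from lb that have d: "distinct (map (nth fl) (nbrs Lc v))"
      and s: "set (map (nth fl) (nbrs Lc v)) = set (nbrs L (fl ! v))"
      by (auto simp: list_all_iff)
    from d have "inj_on (nth fl) (set (nbrs Lc v))" by (simp add: distinct_map)
    moreover from s have "(nth fl) ` set (nbrs Lc v) = set (nbrs L (fl ! v))" by simp
    ultimately show ?thesis unfolding bij_betw_def set_nbrs by simp
  qed
  show ?thesis unfolding covering_map_def using 1 2 3 by blast
qed

lemma tf_sound: "tf_check L \<Longrightarrow> \<not> (adjL L x y \<and> adjL L y z \<and> adjL L z x)"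
proof
  assume t: "tf_check L" and h: "adjL L x y \<and> adjL L y z \<and> adjL L z x"
  have zx: "z \<in> set (nbrs L x)" and zy: "z \<in> set (nbrs L y)"
    using h set_nbrs adjL_sym by auto
  have "z \<in> set (nbrs L y)" "z \<in> set (nbrs L x)" using zx zy by auto
  from h have "(x, y) \<in> set L \<or> (y, x) \<in> set L" by (simp add: adjL_def)
  then show False
  proof
    assume "(x, y) \<in> set L"
    with t have "\<forall>w\<in>set (nbrs L x). w \<notin> set (nbrs L y)" by (auto simp: tf_check_def list_all_iff)
    with zx zy show False by blast
  next
    assume "(y, x) \<in> set L"
    with t have "\<forall>w\<in>set (nbrs L y). w \<notin> set (nbrs L x)" by (auto simp: tf_check_def list_all_iff)
    with zx zy show False by blast
  qed
qed

lemma iso_tri: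
  assumes "graph_iso V E V' E'" "x \<in> V" "y \<in> V" "z \<in> V" "E x y" "E y z" "E z x"
  shows "\<exists>a b c. E' a b \<and> E' b c \<and> E' c a"
  using assms unfolding graph_iso_def by blast

lemma fiber_le:
  assumes sg: "simple_graph VC EC" and cm: "covering_map VC EC V E f" and fin: "finite VC"
    and e: "E u w"
  shows "card {x\<in>VC. f x = u} \<le> card {x\<in>VC. f x = w}"
proof -
  let ?g = "\<lambda>x. SOME y. EC x y \<and> f y = w"
  have ex: "\<exists>y. EC x y \<and> f y = w" if "x \<in> VC" "f x = u" for x
  proof -
    from cm that have "bij_betw f {y. EC x y} {t. E u t}" unfolding covering_map_def by auto
    then have "f ` {y. EC x y} = {t. E u t}" by (simp add: bij_betw_def)
    with e show ?thesis by (metis (mono_tags, lifting) imageE mem_Collect_eq)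
  qed
  have gp: "EC x (?g x) \<and> f (?g x) = w" if "x \<in> VC" "f x = u" for x
    using someI_ex[OF ex[OF that]] .
  have "inj_on ?g {x\<in>VC. f x = u}"
  proof (rule inj_onI)
    fix x x' assume x: "x \<in> {x\<in>VC. f x = u}" and x': "x' \<in> {x\<in>VC. f x = u}" and eq: "?g x = ?g x'"
    let ?y = "?g x"
    have a0: "EC x ?y" using gp x by auto
    have b0: "EC x' ?y" using gp x' eq by auto
    have a: "EC ?y x" and b: "EC ?y x'" using a0 b0 sg unfolding simple_graph_def by auto
    have yV: "?y \<in> VC" using a sg unfolding simple_graph_def by blast
    from cm yV have "inj_on f {t. EC ?y t}" unfolding covering_map_def bij_betw_def by blast
    then show "x = x'" using a b x x' by (auto dest: inj_onD)
  qed
  moreover have "?g ` {x\<in>VC. f x = u} \<subseteq> {x\<in>VC. f x = w}"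
    using gp sg unfolding simple_graph_def by blast
  ultimately show ?thesis by (rule card_inj_on_le) (use fin in auto)
qed

lemma fiber_dvd:
  assumes sg: "simple_graph VC EC" and cm: "covering_map VC EC V E f" and fin: "finite VC"
    and symE: "\<And>a b. E a b \<Longrightarrow> E b a" and cn: "connected_graph V E"
  shows "card V dvd card VC"
proof -
  have eq1: "card {x\<in>VC. f x = u} = card {x\<in>VC. f x = w}" if "E u w" for u w
    using fiber_le[OF sg cm fin that] fiber_le[OF sg cm fin symE[OF that]] by simp
  have eq: "card {x\<in>VC. f x = u} = card {x\<in>VC. f x = w}" if "E\<^sup>*\<^sup>* u w" for u w
    using that by (induction rule: rtranclp_induct) (auto simp: eq1)
  from cn obtain u0 where u0: "u0 \<in> V" unfolding connected_graph_def by blast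
  have fV: "f ` VC = V" using cm unfolding covering_map_def by blast
  have finV: "finite V" using fV fin by blast
  have VCU: "VC = (\<Union>u\<in>V. {x\<in>VC. f x = u})" using fV by blast
  have "card VC = (\<Sum>u\<in>V. card {x\<in>VC. f x = u})"
    by (subst VCU, rule card_UN_disjoint) (use finV fin in auto)
  also have "\<dots> = (\<Sum>u\<in>V. card {x\<in>VC. f x = u0})"
    using eq cn u0 unfolding connected_graph_def by (intro sum.cong) auto
  also have "\<dots> = card V * card {x\<in>VC. f x = u0}" by simp
  finally show ?thesis by simp
qed

lemma lower_bound:
  assumes "common_cover V E {0..<6} (adjL L1) {0..<9} (adjL L2)"
  shows "18 \<le> card V"
proof -
  from assms have fs: "finite_simple_graph V E" and cV: "connected_graph V E"
    and c1: "covering_graph V E {0..<6} (adjL L1)" and c2: "covering_graph V E {0..<9} (adjL L2)"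
    unfolding common_cover_def by auto
  from fs have fin: "finite V" and sg: "simple_graph V E" unfolding finite_simple_graph_def by auto
  from c1 obtain f1 where f1: "covering_map V E {0..<6} (adjL L1) f1" unfolding covering_graph_def by blast
  from c2 obtain f2 where f2: "covering_map V E {0..<9} (adjL L2) f2" unfolding covering_graph_def by blast
  have "card {0..<6::nat} dvd card V"
    by (rule fiber_dvd[OF sg f1 fin adjL_sym conn_sound]) (use checks in auto)
  then have d6: "6 dvd card V" by simp
  have "card {0..<9::nat} dvd card V"
    by (rule fiber_dvd[OF sg f2 fin adjL_sym conn_sound]) (use checks in auto)
  then have d9: "9 dvd card V" by simp
  from cV fin have "card V > 0" unfolding connected_graph_def by (simp add: card_gt_0_iff)
  with d6 d9 show ?thesis by presburger
qed

theorem mainTheorem6: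
  shows "\<exists>(V1::nat set) E1 (V2::nat set) E2.
     finite_simple_graph V1 E1 \<and> connected_graph V1 E1 \<and>
     finite_simple_graph V2 E2 \<and> connected_graph V2 E2 \<and>
     (\<exists>(VA::nat set) EA (VB::nat set) EB.
        common_cover VA EA V1 E1 V2 E2 \<and>
        common_cover VB EB V1 E1 V2 E2 \<and>
        \<not> graph_iso VA EA VB EB \<and>
        (\<forall>(V::nat set) E. common_cover V E V1 E1 V2 E2 \<longrightarrow>
            card VA \<le> card V \<and> card VB \<le> card V))"
proof -
  have cA: "common_cover {0..<18} (adjL LA) {0..<6} (adjL L1) {0..<9} (adjL L2)"
    unfolding common_cover_def covering_graph_def
    using wf_sound conn_sound cov_sound checks by blast
  have cB: "common_cover {0..<18} (adjL LB) {0..<6} (adjL L1) {0..<9} (adjL L2)"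
    unfolding common_cover_def covering_graph_def
    using wf_sound conn_sound cov_sound checks by blast
  have ni: "\<not> graph_iso {0..<18::nat} (adjL LA) {0..<18} (adjL LB)"
  proof
    assume "graph_iso {0..<18::nat} (adjL LA) {0..<18} (adjL LB)"
    from iso_tri[OF this _ _ _ triA[THEN conjunct1] triA[THEN conjunct2, THEN conjunct1]
        triA[THEN conjunct2, THEN conjunct2]]
    obtain a b c where "adjL LB a b \<and> adjL LB b c \<and> adjL LB c a" by auto
    with tf_sound[OF checks(13)] show False by blast
  qed
  show ?thesis
    apply (rule exI[of _ "{0..<6}"], rule exI[of _ "adjL L1"])
    apply (rule exI[of _ "{0..<9}"], rule exI[of _ "adjL L2"])
    apply (intro conjI)
        apply (rule wf_sound checks conn_sound)+
    apply (rule exI[of _ "{0..<18}"], rule exI[of _ "adjL LA"])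
    apply (rule exI[of _ "{0..<18}"], rule exI[of _ "adjL LB"])
    using cA cB ni lower_bound by auto
qed

end
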